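(* Let $H$ be a graph that is not a trivial pattern. Then the triangle $K_3$ is a projection of $H$.
   Context: A graph $H$ is a trivial pattern if, after removing its isolated vertices, it is either a complete bipartite graph or has at most two edges. A graph $H'$ is a projection of $H$ if $H'$ can be obtained from $H$ by a sequence of vertex deletions and identifications of two nonadjacent vertices. *)

theory Defs
  imports Main
begin

definition graph :: "'a set \<Rightarrow> 'a set set \<Rightarrow> bool" where
  "graph V E \<longleftrightarrow> finite V \<and> (\<forall>e\<in>E. e \<subseteq> V \<and> card e = 2)"

definition adjacent :: "'a set set \<Rightarrow> 'a \<Rightarrow> 'a \<Rightarrow> bool" where
  "adjacent E u v \<longleftrightarrow> {u, v} \<in> E"

definition del_vertex :: "'a set \<Rightarrow> 'a set set \<Rightarrow> 'a \<Rightarrow> 'a set \<times> 'a set set" where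
  "del_vertex V E v = (V - {v}, {e \<in> E. v \<notin> e})"

definition identify :: "'a set \<Rightarrow> 'a set set \<Rightarrow> 'a \<Rightarrow> 'a \<Rightarrow> 'a set \<times> 'a set set" where
  "identify V E u v = (V - {v}, (\<lambda>e. (\<lambda>x. if x = v then u else x) ` e) ` E)"

inductive projection :: "'a set \<Rightarrow> 'a set set \<Rightarrow> 'a set \<Rightarrow> 'a set set \<Rightarrow> bool" where
  proj_refl: "projection V E V E"
| proj_del: "projection V E V' E' \<Longrightarrow> v \<in> V' \<Longrightarrow>
     projection V E (fst (del_vertex V' E' v)) (snd (del_vertex V' E' v))"
| proj_ident: "projection V E V' E' \<Longrightarrow> u \<in> V' \<Longrightarrow> v \<in> V' \<Longrightarrow> u \<noteq> v \<Longrightarrow>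
     \<not> adjacent E' u v \<Longrightarrow>
     projection V E (fst (identify V' E' u v)) (snd (identify V' E' u v))"

definition is_triangle :: "'a set \<Rightarrow> 'a set set \<Rightarrow> bool" where
  "is_triangle V E \<longleftrightarrow> card V = 3 \<and> E = {e. e \<subseteq> V \<and> card e = 2}"

text \<open>Non-isolated vertices are exactly those covered by edges.\<close>
definition complete_bipartite_edges :: "'a set set \<Rightarrow> bool" where
  "complete_bipartite_edges E \<longleftrightarrow>
     (\<exists>A B. A \<inter> B = {} \<and> A \<union> B = \<Union>E \<and> E = {{a, b} | a b. a \<in> A \<and> b \<in> B})"

text \<open>Trivial pattern: after removing isolated vertices (leaving the graph with vertex set
  \<Union>E and edge set E), it is complete bipartite or has at most two edges.\<close>
definition trivial_pattern :: "'a set \<Rightarrow> 'a set set \<Rightarrow> bool" where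
  "trivial_pattern V E \<longleftrightarrow> complete_bipartite_edges E \<or> card E \<le> 2"

end

theory Submission
  imports Defs
begin

lemma proj_trans:
  assumes "projection V2 E2 V3 E3" "projection V1 E1 V2 E2"
  shows "projection V1 E1 V3 E3"
  using assms
proof (induction rule: projection.induct)
  case (proj_refl V E) then show ?case by simp
next
  case (proj_del V E V' E' v) then show ?case by (blast intro: projection.proj_del)
next
  case (proj_ident V E V' E' u v) then show ?case by (blast intro: projection.proj_ident)
qed

lemma proj_del_set:
  assumes "finite D"
  shows "D \<subseteq> V' \<Longrightarrow> projection V E V' E' \<Longrightarrow> projection V E (V' - D) {e\<in>E'. e \<inter> D = {}}"
  using assms
proof (induction D rule: finite_induct)
  case empty then show ?case by simp
next
  case (insert x F)
  have p: "projection V E (V' - F) {e\<in>E'. e \<inter> F = {}}" using insert by auto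
  have "x \<in> V' - F" using insert by auto
  from projection.proj_del[OF p this]
  have "projection V E (fst (del_vertex (V' - F) {e\<in>E'. e \<inter> F = {}} x))
          (snd (del_vertex (V' - F) {e\<in>E'. e \<inter> F = {}} x))" .
  moreover have "fst (del_vertex (V' - F) {e\<in>E'. e \<inter> F = {}} x) = V' - insert x F"
    by (auto simp: del_vertex_def)
  moreover have "snd (del_vertex (V' - F) {e\<in>E'. e \<inter> F = {}} x) = {e\<in>E'. e \<inter> insert x F = {}}"
    by (auto simp: del_vertex_def)
  ultimately show ?case by simp
qed

lemma proj_restrict:
  assumes "graph V E" "W \<subseteq> V"
  shows "projection V E W {e\<in>E. e \<subseteq> W}"
proof -
  have f: "finite V" using assms by (simp add: graph_def)
  have "projection V E (V - (V - W)) {e\<in>E. e \<inter> (V - W) = {}}"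
    by (rule proj_del_set) (use f projection.proj_refl in auto)
  moreover have "V - (V - W) = W" using assms by auto
  moreover have "{e\<in>E. e \<inter> (V - W) = {}} = {e\<in>E. e \<subseteq> W}"
    using assms by (auto simp: graph_def)
  ultimately show ?thesis by simp
qed

lemma proj_ident1:
  assumes "u \<in> V" "v \<in> V" "u \<noteq> v" "{u, v} \<notin> E"
    "V - {v} = V1" "(\<lambda>e. (\<lambda>x. if x = v then u else x) ` e) ` E = E1"
  shows "projection V E V1 E1"
  using projection.proj_ident[OF projection.proj_refl[of V E] assms(1-3)] assms(4-6)
  by (simp add: identify_def adjacent_def)

lemma pairs3:
  assumes "distinct [a,b,c]"
  shows "{e. e \<subseteq> {a,b,c} \<and> card e = 2} = {{a,b},{b,c},{a,c}}"
  using assms by (auto simp: card_2_iff insert_commute)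

lemma tri_explicit:
  assumes "distinct [a,b,c]"
  shows "is_triangle {a,b,c} {{a,b},{b,c},{a,c}}"
  using assms pairs3[OF assms] by (simp add: is_triangle_def)

lemma p4_explicit:
  assumes "distinct [a,b,c,d]"
  shows "\<exists>V' E'. projection {a,b,c,d} {{a,b},{b,c},{c,d}} V' E' \<and> is_triangle V' E'"
proof -
  have "projection {a,b,c,d} {{a,b},{b,c},{c,d}} {a,b,c} {{a,b},{b,c},{a,c}}"
    by (rule proj_ident1[of a _ d]) (use assms in \<open>auto simp: insert_commute\<close>)
  then show ?thesis using tri_explicit[of a b c] assms by auto
qed

lemma p3k2_explicit:
  assumes "distinct [a,b,c,d,e]"
  shows "\<exists>V' E'. projection {a,b,c,d,e} {{a,b},{b,c},{d,e}} V' E' \<and> is_triangle V' E'"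
proof -
  have "projection {a,b,c,d,e} {{a,b},{b,c},{d,e}} {a,b,c,e} {{a,b},{b,c},{c,e}}"
    by (rule proj_ident1[of c _ d]) (use assms in \<open>auto simp: insert_commute\<close>)
  moreover obtain V' E' where "projection {a,b,c,e} {{a,b},{b,c},{c,e}} V' E'" "is_triangle V' E'"
    using p4_explicit[of a b c e] assms by auto
  ultimately show ?thesis using proj_trans by blast
qed

lemma k3k2_explicit:
  assumes "distinct [a,b,c,d,e,f]"
  shows "\<exists>V' E'. projection {a,b,c,d,e,f} {{a,b},{c,d},{e,f}} V' E' \<and> is_triangle V' E'"
proof -
  have "projection {a,b,c,d,e,f} {{a,b},{c,d},{e,f}} {a,b,d,e,f} {{a,b},{b,d},{e,f}}"
    by (rule proj_ident1[of b _ c]) (use assms in \<open>auto simp: insert_commute\<close>)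
  moreover obtain V' E' where "projection {a,b,d,e,f} {{a,b},{b,d},{e,f}} V' E'" "is_triangle V' E'"
    using p3k2_explicit[of a b d e f] assms by auto
  ultimately show ?thesis using proj_trans by blast
qed


lemma graph_edge:
  assumes "graph V E" "{a,b} \<in> E"
  shows "a \<noteq> b" "a \<in> V" "b \<in> V"
  using assms by (auto simp: graph_def card_insert_if split: if_splits)

lemma restrict_eq:
  assumes "graph V E" "F \<subseteq> E" "\<forall>e\<in>F. e \<subseteq> W"
    "\<And>x y. x \<in> W \<Longrightarrow> y \<in> W \<Longrightarrow> x \<noteq> y \<Longrightarrow> {x,y} \<in> E \<Longrightarrow> {x,y} \<in> F"
  shows "{e\<in>E. e \<subseteq> W} = F"
proof
  show "{e\<in>E. e \<subseteq> W} \<subseteq> F"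
  proof
    fix e assume e: "e \<in> {e\<in>E. e \<subseteq> W}"
    then have "card e = 2" using assms(1) by (auto simp: graph_def)
    then obtain x y where "e = {x,y}" "x \<noteq> y" by (auto simp: card_2_iff)
    then show "e \<in> F" using e assms(4) by auto
  qed
qed (use assms in auto)

definition goal :: "'a set \<Rightarrow> 'a set set \<Rightarrow> bool" where
  "goal V E \<longleftrightarrow> (\<exists>V' E'. projection V E V' E' \<and> is_triangle V' E')"

lemma goal_via:
  assumes "graph V E" "W \<subseteq> V" "{e\<in>E. e \<subseteq> W} = F"
    "\<exists>V' E'. projection W F V' E' \<and> is_triangle V' E'"
  shows "goal V E"
  using proj_restrict[OF assms(1,2)] assms(3,4) proj_trans unfolding goal_def by metis

lemma tri_goal:
  assumes g: "graph V E" and ab: "{a,b} \<in> E" and bc: "{b,c} \<in> E" and ac: "{a,c} \<in> E"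
  shows "goal V E"
proof -
  have d: "distinct [a,b,c]" using graph_edge[OF g ab] graph_edge[OF g bc] graph_edge[OF g ac] by simp
  have W: "{a,b,c} \<subseteq> V" using graph_edge[OF g ab] graph_edge[OF g bc] by simp
  have e: "{e\<in>E. e \<subseteq> {a,b,c}} = {{a,b},{b,c},{a,c}}"
    apply (rule restrict_eq[OF g])
    using ab bc ac apply simp
     apply simp
    apply (elim insertE emptyE)
    apply (simp_all add: doubleton_eq_iff)
    done
  have "projection {a,b,c} {{a,b},{b,c},{a,c}} {a,b,c} {{a,b},{b,c},{a,c}}" by (rule projection.proj_refl)
  then show ?thesis using goal_via[OF g W e] tri_explicit[OF d] by blast
qed

lemma p4_goal:
  assumes g: "graph V E" and d: "distinct [a,b,c,d]" and es: "{a,b} \<in> E" "{b,c} \<in> E" "{c,d} \<in> E"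
    and ns: "{a,c} \<notin> E" "{a,d} \<notin> E" "{b,d} \<notin> E"
  shows "goal V E"
proof -
  have ns2: "{c,a} \<notin> E" "{d,a} \<notin> E" "{d,b} \<notin> E"
    using ns by (simp_all add: insert_commute)
  have W: "{a,b,c,d} \<subseteq> V" using graph_edge[OF g es(1)] graph_edge[OF g es(2)] graph_edge[OF g es(3)] by simp
  have e: "{x\<in>E. x \<subseteq> {a,b,c,d}} = {{a,b},{b,c},{c,d}}"
    apply (rule restrict_eq[OF g])
    using es apply simp
     apply simp
    apply (elim insertE emptyE)
    using ns ns2 apply (simp_all add: doubleton_eq_iff)
    done
  show ?thesis using goal_via[OF g W e] p4_explicit[OF d] by blast
qed

lemma p3k2_goal:
  assumes g: "graph V E" and d: "distinct [a,b,c,d,e]" and es: "{a,b} \<in> E" "{b,c} \<in> E" "{d,e} \<in> E"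
    and ns: "{a,c} \<notin> E" "{a,d} \<notin> E" "{a,e} \<notin> E" "{b,d} \<notin> E" "{b,e} \<notin> E" "{c,d} \<notin> E" "{c,e} \<notin> E"
  shows "goal V E"
proof -
  have ns2: "{c,a} \<notin> E" "{d,a} \<notin> E" "{e,a} \<notin> E" "{d,b} \<notin> E" "{e,b} \<notin> E" "{d,c} \<notin> E" "{e,c} \<notin> E"
    using ns by (simp_all add: insert_commute)
  have W: "{a,b,c,d,e} \<subseteq> V" using graph_edge[OF g es(1)] graph_edge[OF g es(2)] graph_edge[OF g es(3)] by simp
  have e: "{x\<in>E. x \<subseteq> {a,b,c,d,e}} = {{a,b},{b,c},{d,e}}"
    apply (rule restrict_eq[OF g])
    using es apply simp
     apply simp
    apply (elim insertE emptyE)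
    using ns ns2 apply (simp_all add: doubleton_eq_iff)
    done
  show ?thesis using goal_via[OF g W e] p3k2_explicit[OF d] by blast
qed

lemma k3k2_goal:
  assumes g: "graph V E" and d: "distinct [a,b,c,d,e,f]" and es: "{a,b} \<in> E" "{c,d} \<in> E" "{e,f} \<in> E"
    and ns: "{a,c} \<notin> E" "{a,d} \<notin> E" "{a,e} \<notin> E" "{a,f} \<notin> E" "{b,c} \<notin> E" "{b,d} \<notin> E" "{b,e} \<notin> E" "{b,f} \<notin> E" "{c,e} \<notin> E" "{c,f} \<notin> E" "{d,e} \<notin> E" "{d,f} \<notin> E"
  shows "goal V E"
proof -
  have ns2: "{c,a} \<notin> E" "{d,a} \<notin> E" "{e,a} \<notin> E" "{f,a} \<notin> E" "{c,b} \<notin> E" "{d,b} \<notin> E" "{e,b} \<notin> E" "{f,b} \<notin> E" "{e,c} \<notin> E" "{f,c} \<notin> E" "{e,d} \<notin> E" "{f,d} \<notin> E"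
    using ns by (simp_all add: insert_commute)
  have W: "{a,b,c,d,e,f} \<subseteq> V" using graph_edge[OF g es(1)] graph_edge[OF g es(2)] graph_edge[OF g es(3)] by simp
  have e: "{x\<in>E. x \<subseteq> {a,b,c,d,e,f}} = {{a,b},{c,d},{e,f}}"
    apply (rule restrict_eq[OF g])
    using es apply simp
     apply simp
    apply (elim insertE emptyE)
    using ns ns2 apply (simp_all add: doubleton_eq_iff)
    done
  show ?thesis using goal_via[OF g W e] k3k2_explicit[OF d] by blast
qed

lemma comb:
  fixes E :: "'a set set"
  assumes c2: "\<forall>e\<in>E. card e = 2"
    and T: "\<And>a b c. {a,b} \<in> E \<Longrightarrow> {b,c} \<in> E \<Longrightarrow> {a,c} \<in> E \<Longrightarrow> False"
    and P: "\<And>a b c d. {a,b} \<in> E \<Longrightarrow> {b,c} \<in> E \<Longrightarrow> {c,d} \<in> E \<Longrightarrow> a \<noteq> d \<Longrightarrow> {a,d} \<in> E"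
    and NP: "\<And>a b c d e. distinct [a,b,c,d,e] \<Longrightarrow> {a,b} \<in> E \<Longrightarrow> {b,c} \<in> E \<Longrightarrow> {d,e} \<in> E \<Longrightarrow>
       {a,d} \<notin> E \<Longrightarrow> {a,e} \<notin> E \<Longrightarrow> {b,d} \<notin> E \<Longrightarrow> {b,e} \<notin> E \<Longrightarrow> {c,d} \<notin> E \<Longrightarrow> {c,e} \<notin> E \<Longrightarrow> False"
    and N3: "\<And>a b c d e f. distinct [a,b,c,d,e,f] \<Longrightarrow> {a,b} \<in> E \<Longrightarrow> {c,d} \<in> E \<Longrightarrow> {e,f} \<in> E \<Longrightarrow>
       {a,c} \<notin> E \<Longrightarrow> {a,d} \<notin> E \<Longrightarrow> {a,e} \<notin> E \<Longrightarrow> {a,f} \<notin> E \<Longrightarrow>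
       {b,c} \<notin> E \<Longrightarrow> {b,d} \<notin> E \<Longrightarrow> {b,e} \<notin> E \<Longrightarrow> {b,f} \<notin> E \<Longrightarrow>
       {c,e} \<notin> E \<Longrightarrow> {c,f} \<notin> E \<Longrightarrow> {d,e} \<notin> E \<Longrightarrow> {d,f} \<notin> E \<Longrightarrow> False"
    and fin: "finite E" and cE: "card E \<ge> 3"
  shows "complete_bipartite_edges E"
proof -
  have ne: "\<And>a b. {a,b} \<in> E \<Longrightarrow> a \<noteq> b"
  proof
    fix a b assume "{a,b} \<in> E" "a = b"
    then have "card {a,b} = 2" "card {a,b} = 1" using c2 by auto
    then show False by simp
  qed
  have sym: "\<And>a b. {a,b} \<in> E \<Longrightarrow> {b,a} \<in> E" by (simp add: insert_commute)
  have "E \<noteq> {}" using cE by auto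
  then obtain e0 where "e0 \<in> E" by auto
  then have "card e0 = 2" using c2 by auto
  then obtain x y where "e0 = {x,y}" unfolding card_2_iff by blast
  with \<open>e0 \<in> E\<close> have xy: "{x,y} \<in> E" by simp
  have S1: False if ind: "distinct [s,t,u,v]" "{s,t} \<in> E" "{u,v} \<in> E"
      "{s,u} \<notin> E" "{s,v} \<notin> E" "{t,u} \<notin> E" "{t,v} \<notin> E"
      and q: "q \<notin> {s,t,u,v}" "{q,s} \<in> E" for q s t u v
  proof -
    have "{q,t} \<notin> E" using T[of q s t] ind(2) q(2) by blast
    moreover have "{q,u} \<notin> E"
    proof
      assume "{q,u} \<in> E"
      moreover have "t \<noteq> u" using ind(1) by simp
      ultimately have "{t,u} \<in> E" using P[OF sym[OF ind(2)] sym[OF q(2)]] by blast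
      then show False using ind by simp
    qed
    moreover have "{q,v} \<notin> E"
    proof
      assume "{q,v} \<in> E"
      moreover have "t \<noteq> v" using ind(1) by simp
      ultimately have "{t,v} \<in> E" using P[OF sym[OF ind(2)] sym[OF q(2)]] by blast
      then show False using ind by simp
    qed
    ultimately show False using NP[of q s t u v] ind q by auto
  qed
  have no2K2: False if zw: "{z,w} \<in> E" "{z,x} \<notin> E" "{z,y} \<notin> E" "{w,x} \<notin> E" "{w,y} \<notin> E" for z w
  proof -
    have zx: "z \<noteq> x" "z \<noteq> y" "w \<noteq> x" "w \<noteq> y" "z \<noteq> w" "x \<noteq> y"
    proof -
      show "z \<noteq> x" using zw xy by auto
      show "z \<noteq> y" using zw(2) sym[OF xy] by auto
      show "w \<noteq> x" using zw(1,2) by auto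
      show "w \<noteq> y" using zw(1,3) by auto
      show "z \<noteq> w" using ne zw by blast
      show "x \<noteq> y" using ne xy by blast
    qed
    have "card (E - {{x,y},{z,w}}) > 0"
    proof -
      have "card (E - {{x,y},{z,w}}) \<ge> card E - card {{x,y},{z,w}}" by (rule diff_card_le_card_Diff) simp
      moreover have "card {{x,y},{z,w}} \<le> 2" by (simp add: card_insert_if)
      ultimately show ?thesis using cE by linarith
    qed
    then have "E - {{x,y},{z,w}} \<noteq> {}" by (intro notI) simp
    then obtain e where "e \<in> E - {{x,y},{z,w}}" by blast
    then have e: "e \<in> E" "e \<noteq> {x,y}" "e \<noteq> {z,w}" by auto
    have "card e = 2" using c2 e by auto
    then obtain p q where pq: "e = {p,q}" "p \<noteq> q" unfolding card_2_iff by blast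
    have i1: "distinct [x,y,z,w]" "{x,y} \<in> E" "{z,w} \<in> E" "{x,z} \<notin> E" "{x,w} \<notin> E" "{y,z} \<notin> E" "{y,w} \<notin> E"
      using zx xy zw by (simp_all add: insert_commute)
    have i2: "distinct [y,x,z,w]" "{y,x} \<in> E" "{z,w} \<in> E" "{y,z} \<notin> E" "{y,w} \<notin> E" "{x,z} \<notin> E" "{x,w} \<notin> E"
      using i1 by (auto simp: insert_commute)
    have i3: "distinct [z,w,x,y]" "{z,w} \<in> E" "{x,y} \<in> E" "{z,x} \<notin> E" "{z,y} \<notin> E" "{w,x} \<notin> E" "{w,y} \<notin> E"
      using i1 by (auto simp: insert_commute)
    have i4: "distinct [w,z,x,y]" "{w,z} \<in> E" "{x,y} \<in> E" "{w,x} \<notin> E" "{w,y} \<notin> E" "{z,x} \<notin> E" "{z,y} \<notin> E"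
      using i1 by (auto simp: insert_commute)
    have adj: False if "r \<notin> {x,y,z,w}" "{r,x} \<in> E \<or> {r,y} \<in> E \<or> {r,z} \<in> E \<or> {r,w} \<in> E" for r
      using that S1[OF i1, of r] S1[OF i2, of r] S1[OF i3, of r] S1[OF i4, of r] by auto
    have eE: "{p,q} \<in> E" "{q,p} \<in> E" using e pq by (auto simp: insert_commute)
    show False
    proof (cases "p \<in> {x,y,z,w}")
      case True
      show False
      proof (cases "q \<in> {x,y,z,w}")
        case True
        with \<open>p \<in> {x,y,z,w}\<close> have "(p = x \<or> p = y \<or> p = z \<or> p = w) \<and> (q = x \<or> q = y \<or> q = z \<or> q = w)" by simp
        then show False using i1 zw e pq eE by (elim conjE disjE) (simp_all add: doubleton_eq_iff)
      next
        case False
        then show False using adj[of q] \<open>p \<in> {x,y,z,w}\<close> eE by auto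
      qed
    next
      case pF: False
      show False
      proof (cases "q \<in> {x,y,z,w}")
        case True
        then show False using adj[of p] pF eE by auto
      next
        case qF: False
        have "{p,x} \<notin> E" "{p,y} \<notin> E" "{p,z} \<notin> E" "{p,w} \<notin> E" using adj[of p] pF by auto
        moreover have "{q,x} \<notin> E" "{q,y} \<notin> E" "{q,z} \<notin> E" "{q,w} \<notin> E" using adj[of q] qF by auto
        ultimately show False using N3[of x y z w p q] i1 pF qF pq eE by (auto simp: insert_commute)
      qed
    qed
  qed
  define A where "A = {v. {v,y} \<in> E}"
  define B where "B = {v. {v,x} \<in> E}"
  have EP: "(z \<in> A \<and> w \<in> B) \<or> (z \<in> B \<and> w \<in> A)" if zw: "{z,w} \<in> E" for z w
  proof -
    have c1: "w \<in> A" if "z \<in> B" "{z,w} \<in> E" for z w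
    proof -
      have "{w,y} \<in> E"
      proof (cases "w = y")
        case True then show ?thesis using that T[of z x y] xy unfolding B_def by (auto simp: insert_commute)
      next
        case False then show ?thesis using that P[of w z x y] xy unfolding B_def by (auto simp: insert_commute)
      qed
      then show ?thesis by (simp add: A_def)
    qed
    have c2: "w \<in> B" if "z \<in> A" "{z,w} \<in> E" for z w
    proof -
      have "{w,x} \<in> E"
      proof (cases "w = x")
        case True then show ?thesis using that T[of z y x] xy unfolding A_def by (auto simp: insert_commute)
      next
        case False then show ?thesis using that P[of w z y x] xy unfolding A_def by (auto simp: insert_commute)
      qed
      then show ?thesis by (simp add: B_def)
    qed
    have wz: "{w,z} \<in> E" using zw by (simp add: insert_commute)
    show ?thesis
    proof (cases "z \<in> A \<or> z \<in> B \<or> w \<in> A \<or> w \<in> B")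
      case True
      then show ?thesis using c1[OF _ zw] c2[OF _ zw] c1[OF _ wz] c2[OF _ wz] by blast
    next
      case False
      then show ?thesis using no2K2[OF zw] unfolding A_def B_def by (auto simp: insert_commute)
    qed
  qed
  have AB: "A \<inter> B = {}" using T unfolding A_def B_def using xy by (auto simp: insert_commute)
  have eq: "E = {{a, b} | a b. a \<in> A \<and> b \<in> B}"
  proof
    show "E \<subseteq> {{a, b} | a b. a \<in> A \<and> b \<in> B}"
    proof
      fix e assume "e \<in> E"
      then obtain z w where e: "e = {z,w}" using c2 by (metis card_2_iff)
      then show "e \<in> {{a, b} | a b. a \<in> A \<and> b \<in> B}"
        using EP[of z w] \<open>e \<in> E\<close> by (auto simp: insert_commute)
    qed
  next
    show "{{a, b} | a b. a \<in> A \<and> b \<in> B} \<subseteq> E"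
    proof clarify
      fix a b assume a: "a \<in> A" and b: "b \<in> B"
      have "a \<noteq> b" using a b AB by auto
      then show "{a,b} \<in> E" using P[of a y x b] a b xy unfolding A_def B_def by (auto simp: insert_commute)
    qed
  qed
  have un: "A \<union> B = \<Union>E"
  proof
    show "A \<union> B \<subseteq> \<Union>E" unfolding A_def B_def by auto
    show "\<Union>E \<subseteq> A \<union> B"
    proof
      fix v assume "v \<in> \<Union>E"
      then obtain e where "e \<in> E" "v \<in> e" by auto
      then obtain z w where e: "e = {z,w}" using c2 by (metis card_2_iff)
      then show "v \<in> A \<union> B" using EP[of z w] \<open>e \<in> E\<close> \<open>v \<in> e\<close> by auto
    qed
  qed
  show ?thesis unfolding complete_bipartite_edges_def using AB eq un by blast
qed

theorem lemma1p13:
  fixes V :: "'a set" and E :: "'a set set"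
  assumes "graph V E"
    and "\<not> trivial_pattern V E"
  shows "\<exists>V' E'. projection V E V' E' \<and> is_triangle V' E'"
proof (rule ccontr)
  assume ng: "\<not> (\<exists>V' E'. projection V E V' E' \<and> is_triangle V' E')"
  then have ng': "\<not> goal V E" by (simp add: goal_def)
  note g = assms(1)
  have c2: "\<forall>e\<in>E. card e = 2" using g by (simp add: graph_def)
  have fin: "finite E"
  proof -
    have "E \<subseteq> Pow V" using g by (auto simp: graph_def)
    moreover have "finite V" using g by (simp add: graph_def)
    ultimately show ?thesis by (meson finite_Pow_iff finite_subset)
  qed
  have cE: "card E \<ge> 3" and ncb: "\<not> complete_bipartite_edges E"
    using assms(2) by (auto simp: trivial_pattern_def)
  have T: False if "{a,b} \<in> E" "{b,c} \<in> E" "{a,c} \<in> E" for a b c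
    using tri_goal[OF g that] ng' by simp
  have P: "{a,d} \<in> E" if ab: "{a,b} \<in> E" and bc: "{b,c} \<in> E" and cd: "{c,d} \<in> E" and ad: "a \<noteq> d" for a b c d
  proof (rule ccontr)
    assume nad: "{a,d} \<notin> E"
    have "a \<noteq> c" using nad cd by auto
    moreover have "b \<noteq> d" using nad ab by auto
    moreover have "a \<noteq> b" "b \<noteq> c" "c \<noteq> d" using graph_edge[OF g ab] graph_edge[OF g bc] graph_edge[OF g cd] by auto
    moreover have "{a,c} \<notin> E" using T[OF ab bc] by blast
    moreover have "{b,d} \<notin> E" using T[OF bc cd] by blast
    ultimately show False using p4_goal[OF g _ ab bc cd _ nad] ad ng' by auto
  qed
  have NP: False if "distinct [a,b,c,d,e]" "{a,b} \<in> E" "{b,c} \<in> E" "{d,e} \<in> E"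
       "{a,d} \<notin> E" "{a,e} \<notin> E" "{b,d} \<notin> E" "{b,e} \<notin> E" "{c,d} \<notin> E" "{c,e} \<notin> E" for a b c d e
  proof -
    have "{a,c} \<notin> E" using T that(2,3) by blast
    then show False using p3k2_goal[OF g that(1-4) _ that(5-10)] ng' by blast
  qed
  have N3: False if "distinct [a,b,c,d,e,f]" "{a,b} \<in> E" "{c,d} \<in> E" "{e,f} \<in> E"
       "{a,c} \<notin> E" "{a,d} \<notin> E" "{a,e} \<notin> E" "{a,f} \<notin> E"
       "{b,c} \<notin> E" "{b,d} \<notin> E" "{b,e} \<notin> E" "{b,f} \<notin> E"
       "{c,e} \<notin> E" "{c,f} \<notin> E" "{d,e} \<notin> E" "{d,f} \<notin> E" for a b c d e f
    using k3k2_goal[OF g that] ng' by blast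
  have "complete_bipartite_edges E"
    by (rule comb[OF c2 T P NP N3 fin cE]) blast+
  with ncb show False by simp
qed

end
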